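(* Let $L$ be a finite graded lattice of rank $n$ with an $S_n$ EL-labeling, let $\mathfrak m$ be a maximal chain of $L$, and let $\mathfrak m'\in\mathcal{M}_{\mathfrak m}$. Then $Q_{\mathfrak m'}=L_{\mathfrak m'}$.
   Context: An $S_n$ EL-labeling: edge-labeling of covering pairs such that each interval has exactly one maximal chain with weakly increasing labels (bottom to top), lexicographically smallest among its maximal chains, and labels along each maximal chain form a permutation of $[n]$. $\mathfrak m_0$ denotes the unique maximal chain of $L$ whose labels are $1,2,\dots,n$ (the identity permutation). For a maximal chain $\mathfrak c$, $L_{\mathfrak c}$ is the sublattice of $L$ generated by $\mathfrak m_0$ and $\mathfrak c$. $U_i(\mathfrak c)$ ($i\in[n-1]$) is the unique maximal chain agreeing with $\mathfrak c$ except possibly at rank $i$ whose labels have no descent at position $i$. $\mathcal{M}_{\mathfrak c}$ is the set of all chains $U_{i_1}\cdots U_{i_r}(\mathfrak c)$ over all finite sequences (including empty), and $Q_{\mathfrak c}$ is the subposet of $L$ consisting of all elements lying on some chain in $\mathcal{M}_{\mathfrak c}$. *)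

theory Defs
  imports Main "HOL-Library.Multiset"
begin

definition covers :: "'a::order \<Rightarrow> 'a \<Rightarrow> bool" where
  "covers x y \<longleftrightarrow> x < y \<and> \<not> (\<exists>z. x < z \<and> z < y)"

definition sat_chain :: "'a::order \<Rightarrow> 'a \<Rightarrow> 'a list \<Rightarrow> bool" where
  "sat_chain x y cs \<longleftrightarrow> cs \<noteq> [] \<and> hd cs = x \<and> last cs = y \<and>
     (\<forall>j. Suc j < length cs \<longrightarrow> covers (cs ! j) (cs ! Suc j))"

definition maxchain :: "'a::bounded_lattice list \<Rightarrow> bool" where
  "maxchain cs \<longleftrightarrow> sat_chain bot top cs"

definition graded_rank :: "('a::bounded_lattice) itself \<Rightarrow> nat \<Rightarrow> bool" where
  "graded_rank _ n \<longleftrightarrow> (\<forall>cs::'a list. maxchain cs \<longrightarrow> length cs = Suc n)"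

definition labels :: "('a \<Rightarrow> 'a \<Rightarrow> nat) \<Rightarrow> 'a list \<Rightarrow> nat list" where
  "labels lam cs = map (\<lambda>j. lam (cs ! j) (cs ! Suc j)) [0..<length cs - 1]"

definition EL_labeling :: "('a::order \<Rightarrow> 'a \<Rightarrow> nat) \<Rightarrow> bool" where
  "EL_labeling lam \<longleftrightarrow> (\<forall>x y. x \<le> y \<longrightarrow>
     (\<exists>!cs. sat_chain x y cs \<and> sorted (labels lam cs)) \<and>
     (\<forall>cs cs'. sat_chain x y cs \<and> sorted (labels lam cs) \<and> sat_chain x y cs' \<longrightarrow>
        lexordp_eq (labels lam cs) (labels lam cs')))"

definition Sn_EL_labeling :: "nat \<Rightarrow> ('a::bounded_lattice \<Rightarrow> 'a \<Rightarrow> nat) \<Rightarrow> bool" where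
  "Sn_EL_labeling n lam \<longleftrightarrow> EL_labeling lam \<and>
     (\<forall>cs. maxchain cs \<longrightarrow> mset (labels lam cs) = mset [1..<Suc n])"

definition m0 :: "nat \<Rightarrow> ('a::bounded_lattice \<Rightarrow> 'a \<Rightarrow> nat) \<Rightarrow> 'a list" where
  "m0 n lam = (THE cs. maxchain cs \<and> labels lam cs = [1..<Suc n])"

text \<open>U_i(c): the maximal chain agreeing with c except possibly at rank i, with no
  descent at position i (i.e. label_i \<le> label_{i+1}; label_k = labels ! (k-1)).\<close>
definition Uop :: "('a::bounded_lattice \<Rightarrow> 'a \<Rightarrow> nat) \<Rightarrow> nat \<Rightarrow> 'a list \<Rightarrow> 'a list" where
  "Uop lam i c = (THE c'. maxchain c' \<and> length c' = length c \<and>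
      (\<forall>j<length c. j \<noteq> i \<longrightarrow> c' ! j = c ! j) \<and>
      labels lam c' ! (i - 1) \<le> labels lam c' ! i)"

inductive_set Mset :: "('a::bounded_lattice \<Rightarrow> 'a \<Rightarrow> nat) \<Rightarrow> 'a list \<Rightarrow> 'a list set"
  for lam :: "'a \<Rightarrow> 'a \<Rightarrow> nat" and c :: "'a list" where
  base: "c \<in> Mset lam c"
| step: "d \<in> Mset lam c \<Longrightarrow> 1 \<le> i \<Longrightarrow> i < length d - 1 \<Longrightarrow> Uop lam i d \<in> Mset lam c"

definition Qset :: "('a::bounded_lattice \<Rightarrow> 'a \<Rightarrow> nat) \<Rightarrow> 'a list \<Rightarrow> 'a set" where
  "Qset lam c = (\<Union>d\<in>Mset lam c. set d)"

inductive_set gen_sublattice :: "'a::lattice set \<Rightarrow> 'a set" for S :: "'a set" where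
  gen: "x \<in> S \<Longrightarrow> x \<in> gen_sublattice S"
| meet: "x \<in> gen_sublattice S \<Longrightarrow> y \<in> gen_sublattice S \<Longrightarrow> inf x y \<in> gen_sublattice S"
| join: "x \<in> gen_sublattice S \<Longrightarrow> y \<in> gen_sublattice S \<Longrightarrow> sup x y \<in> gen_sublattice S"

definition Lsub :: "nat \<Rightarrow> ('a::bounded_lattice \<Rightarrow> 'a \<Rightarrow> nat) \<Rightarrow> 'a list \<Rightarrow> 'a set" where
  "Lsub n lam c = gen_sublattice (set (m0 n lam) \<union> set c)"

end

theory Submission
  imports Defs
begin


lemma labels_Nil[simp]: "labels lam [] = []" and labels_single[simp]: "labels lam [a] = []"
  by (simp_all add: labels_def)

lemma labels_Cons2[simp]: "labels lam (a # b # rest) = lam a b # labels lam (b # rest)"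
  unfolding labels_def by (simp add: upt_conv_Cons map_Suc_upt[symmetric] del: upt_Suc)

lemma length_labels[simp]: "length (labels lam cs) = length cs - 1"
  by (simp add: labels_def)

lemma sat_chain_single[simp]: "sat_chain x y [a] \<longleftrightarrow> a = x \<and> a = y"
  by (auto simp: sat_chain_def)

lemma sat_chain_Nil[simp]: "\<not> sat_chain x y []"
  by (auto simp: sat_chain_def)

lemma sat_chain_Cons2: "sat_chain x y (a # b # rest) \<longleftrightarrow> a = x \<and> covers a b \<and> sat_chain b y (b # rest)"
proof -
  have "(\<forall>j. Suc j < length (a # b # rest) \<longrightarrow> covers ((a # b # rest) ! j) ((a # b # rest) ! Suc j))
     \<longleftrightarrow> covers a b \<and> (\<forall>j. Suc j < length (b # rest) \<longrightarrow> covers ((b # rest) ! j) ((b # rest) ! Suc j))"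
    (is "?L \<longleftrightarrow> ?R")
  proof
    assume L: ?L
    show ?R
    proof (intro conjI allI impI)
      show "covers a b" using L[rule_format, of 0] by simp
      fix j assume "Suc j < length (b # rest)"
      then show "covers ((b # rest) ! j) ((b # rest) ! Suc j)" using L[rule_format, of "Suc j"] by simp
    qed
  next
    assume ?R then show ?L by (auto simp: nth_Cons split: nat.splits)
  qed
  then show ?thesis by (auto simp: sat_chain_def)
qed

lemma sat_chain_append:
  "sat_chain x y cs \<Longrightarrow> sat_chain y z ds \<Longrightarrow> sat_chain x z (cs @ tl ds) \<and> labels lam (cs @ tl ds) = labels lam cs @ labels lam ds"
proof (induction cs arbitrary: x)
  case Nil then show ?case by simp
next
  case (Cons a cs)
  show ?case
  proof (cases cs)
    case Nil
    with Cons.prems have "a = x" "a = y" by auto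
    moreover obtain d ds' where "ds = d # ds'" using Cons.prems by (cases ds) auto
    moreover have "d = y" using Cons.prems(2) \<open>ds = d # ds'\<close> by (simp add: sat_chain_def)
    ultimately show ?thesis using Cons.prems Nil by auto
  next
    case (Cons b rest)
    with Cons.prems have "a = x" "covers a b" "sat_chain b y (b # rest)" by (auto simp: sat_chain_Cons2)
    with Cons.IH[of b] Cons.prems Cons show ?thesis by (auto simp: sat_chain_Cons2)
  qed
qed

lemma sat_chain_le: "sat_chain x y cs \<Longrightarrow> z \<in> set cs \<Longrightarrow> x \<le> z \<and> z \<le> y"
proof (induction cs arbitrary: x z)
  case Nil then show ?case by simp
next
  case (Cons a cs)
  show ?case
  proof (cases cs)
    case Nil with Cons.prems show ?thesis by auto
  next
    case (Cons b rest)
    with Cons.prems have "a = x" "covers a b" "sat_chain b y (b # rest)" by (auto simp: sat_chain_Cons2)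
    have IH: "\<And>w. w \<in> set (b # rest) \<Longrightarrow> b \<le> w \<and> w \<le> y"
      using Cons.IH \<open>sat_chain b y (b # rest)\<close> Cons by blast
    have "x < b" using \<open>covers a b\<close> \<open>a = x\<close> by (simp add: covers_def)
    then show ?thesis using IH[of b] IH[of z] Cons.prems \<open>a = x\<close> Cons
      by (auto intro: order.trans less_imp_le)
  qed
qed

lemma sat_chain_drop:
  "sat_chain x y cs \<Longrightarrow> j < length cs \<Longrightarrow> sat_chain (cs ! j) y (drop j cs) \<and> labels lam (drop j cs) = drop j (labels lam cs)"
proof (induction j arbitrary: x cs)
  case 0 then show ?case by (cases cs) (auto simp: sat_chain_def)
next
  case (Suc j)
  then obtain a b rest where cs: "cs = a # b # rest"
    by (metis Suc_less_eq length_Cons less_nat_zero_code list.exhaust list.size(3))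
  with Suc.prems have "sat_chain b y (b # rest)" by (simp add: sat_chain_Cons2)
  with Suc.IH[of b "b # rest"] Suc.prems cs show ?case by simp
qed

lemma sat_chain_hd: "sat_chain x y cs \<Longrightarrow> cs ! 0 = x"
  by (cases cs) (auto simp: sat_chain_def)

lemma sat_chain_last: "sat_chain x y cs \<Longrightarrow> cs ! (length cs - 1) = y"
  by (auto simp: sat_chain_def last_conv_nth)

lemma sat_chain_nth_mono:
  assumes "sat_chain x y cs" "j \<le> k" "k < length cs" shows "cs ! j \<le> cs ! k"
  using assms(2,3)
proof (induction k)
  case 0 then show ?case by simp
next
  case (Suc k)
  show ?case
  proof (cases "j = Suc k")
    case False
    then have "cs ! j \<le> cs ! k" using Suc by simp
    moreover have "covers (cs ! k) (cs ! Suc k)" using assms(1) Suc.prems by (simp add: sat_chain_def)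
    ultimately show ?thesis by (auto simp: covers_def)
  qed simp
qed

lemma joinl_le_iff: "foldr sup xs bot \<le> (z::'a::bounded_lattice) \<longleftrightarrow> (\<forall>x\<in>set xs. x \<le> z)"
  by (induction xs) auto

lemma joinl_ge: "x \<in> set xs \<Longrightarrow> x \<le> foldr sup xs (bot::'a::bounded_lattice)"
  by (induction xs) (auto intro: le_supI2)

locale SnEL =
  fixes lam :: "'a::{finite,bounded_lattice} \<Rightarrow> 'a \<Rightarrow> nat" and n :: nat
  assumes graded: "graded_rank TYPE('a) n" and SnEL: "Sn_EL_labeling n lam"
begin

lemma EL: "x \<le> y \<Longrightarrow> \<exists>!cs. sat_chain x y cs \<and> sorted (labels lam cs)"
  using SnEL by (simp add: Sn_EL_labeling_def EL_labeling_def)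

lemma inc_uniq: "sat_chain x y c1 \<Longrightarrow> sorted (labels lam c1) \<Longrightarrow> sat_chain x y c2 \<Longrightarrow> sorted (labels lam c2) \<Longrightarrow> c1 = c2"
  using EL[of x y] sat_chain_le[of x y c1 x] sat_chain_hd[of x y c1]
  by (metis nth_mem sat_chain_def length_greater_0_conv)

lemma maxchain_perm: "maxchain cs \<Longrightarrow> mset (labels lam cs) = mset [1..<Suc n]"
  using SnEL by (simp add: Sn_EL_labeling_def)

lemma maxchain_len: "maxchain (cs::'a list) \<Longrightarrow> length cs = Suc n"
  using graded unfolding graded_rank_def by blast

lemma ex_chain: "x \<le> y \<Longrightarrow> \<exists>cs. sat_chain x y cs \<and> sorted (labels lam cs)"
  using EL by blast

definition Sl :: "'a \<Rightarrow> nat set" where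
  "Sl y = set (labels lam (SOME cs. sat_chain bot y cs))"

lemma split_mset: "sat_chain bot y cs \<Longrightarrow> sat_chain y top ds \<Longrightarrow>
   mset (labels lam cs) + mset (labels lam ds) = mset [1..<Suc n]"
  using sat_chain_append[of bot y cs top ds lam] maxchain_perm[of "cs @ tl ds"]
  by (simp add: maxchain_def)

lemma bot_chain: assumes "sat_chain bot y cs"
  shows "set (labels lam cs) = Sl y" "distinct (labels lam cs)"
proof -
  obtain ds where ds: "sat_chain y top ds" using ex_chain[of y top, OF top_greatest] by blast
  have "\<exists>cs. sat_chain bot y cs" using assms by blast
  then have c0: "sat_chain bot y (SOME cs. sat_chain bot y cs)" by (rule someI_ex)
  have "mset (labels lam cs) + mset (labels lam ds) = mset (labels lam (SOME cs. sat_chain bot y cs)) + mset (labels lam ds)"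
    using split_mset[OF assms ds] split_mset[OF c0 ds] by simp
  then have "mset (labels lam cs) = mset (labels lam (SOME cs. sat_chain bot y cs))" by simp
  then show "set (labels lam cs) = Sl y" unfolding Sl_def by (metis set_mset_mset)
  have "distinct (labels lam cs @ labels lam ds)"
    using split_mset[OF assms ds] mset_eq_imp_distinct_iff[of "labels lam cs @ labels lam ds" "[1..<Suc n]"]
    by simp
  then show "distinct (labels lam cs)" by simp
qed

lemma finite_Sl[simp]: "finite (Sl y)"
  by (simp add: Sl_def)

lemma chain_Sl: assumes "sat_chain x y cs"
  shows "Sl y = Sl x \<union> set (labels lam cs)" "Sl x \<inter> set (labels lam cs) = {}" "distinct (labels lam cs)"
    "card (Sl y) = card (Sl x) + length (labels lam cs)"
proof -
  obtain bs where bs: "sat_chain bot x bs" using ex_chain[of bot x, OF bot_least] by blast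
  note A = sat_chain_append[OF bs assms, of lam]
  have d: "distinct (labels lam bs @ labels lam cs)" using bot_chain(2)[of y "bs @ tl cs"] A by simp
  show "Sl y = Sl x \<union> set (labels lam cs)" using bot_chain(1)[of y "bs @ tl cs"] bot_chain(1)[OF bs] A by simp
  show "Sl x \<inter> set (labels lam cs) = {}" using d bot_chain(1)[OF bs] by auto
  show "distinct (labels lam cs)" using d by simp
  show "card (Sl y) = card (Sl x) + length (labels lam cs)"
  proof -
    have "card (Sl y) = card (Sl x \<union> set (labels lam cs))" using bot_chain(1)[of y "bs @ tl cs"] bot_chain(1)[OF bs] A by simp
    also have "\<dots> = card (Sl x) + card (set (labels lam cs))"
      using d bot_chain(1)[OF bs] by (intro card_Un_disjoint) auto
    also have "card (set (labels lam cs)) = length (labels lam cs)" using d by (simp add: distinct_card)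
    finally show ?thesis .
  qed
qed

lemma Sl_mono: "x \<le> y \<Longrightarrow> Sl x \<subseteq> Sl y"
  using ex_chain[of x y] chain_Sl(1) by blast

lemma Sl_bot[simp]: "Sl bot = {}"
  using bot_chain(1)[of bot "[bot]"] by simp

lemma Sl_top: "Sl top = {1..n}"
proof -
  obtain cs :: "'a list" where "sat_chain bot top cs" using ex_chain[of bot top, OF bot_least] by blast
  then show ?thesis using bot_chain(1)[of top cs] maxchain_perm[of cs]
    by (metis maxchain_def atLeastLessThanSuc_atLeastAtMost set_mset_mset set_upt)
qed

lemma Sl_sub: "Sl y \<subseteq> {1..n}"
  using Sl_mono[of y top] Sl_top by simp


lemma Sl_strict: assumes "x < y" shows "card (Sl x) < card (Sl y)"
proof -
  obtain cs where cs: "sat_chain x y cs" using ex_chain[of x y] assms less_imp_le by blast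
  have "length cs \<noteq> 1"
  proof
    assume "length cs = 1"
    then obtain a where "cs = [a]" by (cases cs) auto
    then show False using cs assms by auto
  qed
  moreover have "length cs \<noteq> 0" using cs by (simp add: sat_chain_def)
  ultimately have "length cs \<ge> 2" by linarith
  then show ?thesis using chain_Sl(4)[OF cs] by simp
qed

lemma Sl_eq: "x \<le> y \<Longrightarrow> card (Sl y) \<le> card (Sl x) \<Longrightarrow> x = y"
  using Sl_strict[of x y] order.order_iff_strict[of x y] by linarith

lemma Sl_eq2: "x \<le> y \<Longrightarrow> Sl y \<subseteq> Sl x \<Longrightarrow> x = y"
  by (rule Sl_eq) (auto intro: card_mono)

lemma cover_Sl: assumes "covers y z"
  shows "Sl z = insert (lam y z) (Sl y)" "lam y z \<notin> Sl y"
proof -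
  have "sat_chain y z [y, z]" using assms by (simp add: sat_chain_Cons2)
  from chain_Sl[OF this] show "Sl z = insert (lam y z) (Sl y)" "lam y z \<notin> Sl y" by auto
qed

lemma cover_card: "covers y z \<Longrightarrow> card (Sl z) = Suc (card (Sl y))"
  using cover_Sl by simp

lemma card_cover: assumes "y < z" "card (Sl z) = Suc (card (Sl y))" shows "covers y z"
  unfolding covers_def
proof (intro conjI notI)
  show "y < z" by fact
  assume "\<exists>w. y < w \<and> w < z"
  then obtain w where "y < w" "w < z" by blast
  then show False using Sl_strict[of y w] Sl_strict[of w z] assms(2) by simp
qed

lemma G: assumes "x \<le> y" "l \<in> Sl y - Sl x" "\<forall>m \<in> Sl y - Sl x. l \<le> m"
  shows "\<exists>z. covers x z \<and> z \<le> y \<and> lam x z = l"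
proof -
  obtain cs where cs: "sat_chain x y cs" "sorted (labels lam cs)" using ex_chain[OF assms(1)] by blast
  have st: "set (labels lam cs) = Sl y - Sl x" using chain_Sl[OF cs(1)] by auto
  obtain a rest where "cs = a # rest" using cs by (cases cs) auto
  moreover have "rest \<noteq> []" using st assms(2) \<open>cs = a # rest\<close> by auto
  ultimately obtain b rest' where cs2: "cs = a # b # rest'" by (cases rest) auto
  then have ab: "a = x" "covers x b" "sat_chain b y (b # rest')" using cs by (auto simp: sat_chain_Cons2)
  have "b \<le> y" using sat_chain_le[OF ab(3)] by simp
  have lab: "labels lam cs = lam x b # labels lam (b # rest')" using cs2 ab by simp
  have "lam x b \<in> Sl y - Sl x" using st lab by auto
  then have "l \<le> lam x b" using assms(3) by auto
  moreover have "lam x b \<le> l"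
  proof -
    have "l \<in> set (labels lam cs)" using st assms(2) by simp
    then show ?thesis using cs(2) lab by auto
  qed
  ultimately show ?thesis using ab \<open>b \<le> y\<close> by auto
qed

lemma G': assumes "x \<le> y" "l \<in> Sl y - Sl x" "\<forall>m \<in> Sl y - Sl x. m \<le> l"
  shows "\<exists>z. covers z y \<and> x \<le> z \<and> lam z y = l"
proof -
  obtain cs where cs: "sat_chain x y cs" "sorted (labels lam cs)" using ex_chain[OF assms(1)] by blast
  have st: "set (labels lam cs) = Sl y - Sl x" using chain_Sl[OF cs(1)] by auto
  have "labels lam cs \<noteq> []" using st assms(2) by auto
  then have "length (labels lam cs) \<noteq> 0" by blast
  then have len: "length cs \<ge> 2" by simp
  define k where "k = length cs - 2"
  have k: "Suc k = length cs - 1" "Suc k < length cs" using len by (auto simp: k_def)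
  have cov: "covers (cs ! k) y" using cs(1) k sat_chain_last[OF cs(1)] unfolding sat_chain_def by metis
  have xz: "x \<le> cs ! k" using sat_chain_le[OF cs(1), of "cs ! k"] k by simp
  have lk: "labels lam cs ! k = lam (cs ! k) y" using k sat_chain_last[OF cs(1)] by (simp add: labels_def)
  have kl: "k < length (labels lam cs)" using k by simp
  have "lam (cs ! k) y \<in> Sl y - Sl x" using st lk kl by (metis nth_mem)
  then have "lam (cs ! k) y \<le> l" using assms(3) by auto
  moreover have "l \<le> lam (cs ! k) y"
  proof -
    obtain p where "p < length (labels lam cs)" "labels lam cs ! p = l" using st assms(2) by (metis in_set_conv_nth)
    then show ?thesis using sorted_nth_mono[OF cs(2), of p k] lk k by simp
  qed
  ultimately show ?thesis using cov xz by auto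
qed

end


lemma covers_le: "covers x y \<Longrightarrow> x \<le> y"
  unfolding covers_def by (blast intro: less_imp_le)

context SnEL begin

declare upt_Suc[simp del]

lemma m0_prop: "maxchain (m0 n lam) \<and> labels lam (m0 n lam) = [1..<Suc n]"
proof -
  obtain cs :: "'a list" where cs: "sat_chain bot top cs" "sorted (labels lam cs)"
    using ex_chain[of bot top, OF bot_least] by blast
  have mc: "maxchain cs" using cs by (simp add: maxchain_def)
  have "sort [1..<Suc n] = labels lam cs"
    by (rule properties_for_sort[OF maxchain_perm[OF mc] cs(2)])
  moreover have "sort [1..<Suc n] = [1..<Suc n]" by (rule sorted_sort_id) (rule sorted_upt)
  ultimately have lab: "labels lam cs = [1..<Suc n]" by simp
  have "m0 n lam = cs" unfolding m0_def
  proof (rule the_equality)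
    show "maxchain cs \<and> labels lam cs = [1..<Suc n]" using mc lab by simp
    fix c2 :: "'a list" assume "maxchain c2 \<and> labels lam c2 = [1..<Suc n]"
    then show "c2 = cs" using inc_uniq[of bot top c2 cs] cs by (simp add: maxchain_def)
  qed
  then show ?thesis using mc lab by simp
qed

definition xk :: "nat \<Rightarrow> 'a" where "xk k = m0 n lam ! k"

lemma m0_chain: "sat_chain bot top (m0 n lam)" "length (m0 n lam) = Suc n"
proof -
  have "maxchain (m0 n lam)" using m0_prop by blast
  then show "sat_chain bot top (m0 n lam)" "length (m0 n lam) = Suc n"
    using maxchain_len[of "m0 n lam"] by (simp_all add: maxchain_def)
qed

lemma xk_cover: assumes "k < n" shows "covers (xk k) (xk (Suc k))" "lam (xk k) (xk (Suc k)) = Suc k"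
proof -
  show "covers (xk k) (xk (Suc k))" using m0_chain assms unfolding sat_chain_def xk_def by simp
  have "labels lam (m0 n lam) ! k = lam (xk k) (xk (Suc k))"
    using m0_chain assms by (simp add: labels_def xk_def)
  moreover have "labels lam (m0 n lam) ! k = Suc k" using m0_prop assms by (simp add: nth_upt)
  ultimately show "lam (xk k) (xk (Suc k)) = Suc k" by simp
qed

lemma xk_0[simp]: "xk 0 = bot"
  using sat_chain_hd[OF m0_chain(1)] by (simp add: xk_def)

lemma xk_n: "xk n = top"
  using sat_chain_last[OF m0_chain(1)] m0_chain(2) by (simp add: xk_def)

lemma Sl_xk: "k \<le> n \<Longrightarrow> Sl (xk k) = {1..k}"
proof (induction k)
  case 0 then show ?case by simp
next
  case (Suc k)
  then show ?case using cover_Sl(1)[OF xk_cover(1)] xk_cover(2) by auto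
qed

lemma xk_mono: "j \<le> k \<Longrightarrow> k \<le> n \<Longrightarrow> xk j \<le> xk k"
  using sat_chain_nth_mono[OF m0_chain(1)] m0_chain(2) by (simp add: xk_def)

lemma G2: assumes "k < n" "covers (xk k) z" "lam (xk k) z = Suc k" shows "z = xk (Suc k)"
proof -
  define D where "D = drop k (m0 n lam)"
  have D: "sat_chain (xk k) top D" "labels lam D = [Suc k..<Suc n]"
    using sat_chain_drop[OF m0_chain(1), of k lam] m0_prop m0_chain(2) assms(1)
    by (auto simp: D_def xk_def)
  obtain es where es: "sat_chain z top es" "sorted (labels lam es)" using ex_chain[of z top, OF top_greatest] by blast
  obtain es' where es': "es = z # es'" using es(1) by (cases es) (auto simp: sat_chain_def)
  define E where "E = xk k # es"
  have E: "sat_chain (xk k) top E" using es es' assms(2) by (simp add: E_def sat_chain_Cons2)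
  have lE: "labels lam E = Suc k # labels lam es" using es' assms(3) by (simp add: E_def)
  have Slz: "Sl z = {1..Suc k}" using cover_Sl(1)[OF assms(2)] assms Sl_xk[of k] by auto
  have "\<forall>e\<in>set (labels lam es). Suc k \<le> e"
  proof
    fix e assume e: "e \<in> set (labels lam es)"
    then have "e \<in> {1..n}" "e \<notin> {1..Suc k}" using chain_Sl(1,2)[OF es(1)] Slz Sl_top by auto
    then show "Suc k \<le> e" by simp
  qed
  then have "sorted (labels lam E)" using lE es(2) by simp
  moreover have "sorted (labels lam D)" using D by simp
  ultimately have "D = E" using inc_uniq[OF D(1) _ E] by simp
  then have "D ! 1 = E ! 1" by simp
  then show ?thesis using assms(1) m0_chain(2) es' by (simp add: D_def E_def xk_def)
qed

lemma X: "k \<le> n \<Longrightarrow> xk k \<le> y \<longleftrightarrow> {1..k} \<subseteq> Sl y"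
proof
  assume "k \<le> n" "xk k \<le> y" then show "{1..k} \<subseteq> Sl y" using Sl_mono Sl_xk by blast
next
  assume "k \<le> n" "{1..k} \<subseteq> Sl y"
  then show "xk k \<le> y"
  proof (induction k)
    case 0 then show ?case by simp
  next
    case (Suc k)
    have "{1..k} \<subseteq> Sl y" using Suc.prems(2) by auto
    then have le: "xk k \<le> y" using Suc.IH Suc.prems(1) by simp
    have "\<forall>m \<in> Sl y - Sl (xk k). Suc k \<le> m" using Sl_xk[of k] Suc.prems Sl_sub by force
    moreover have "Suc k \<in> Sl y - Sl (xk k)" using Sl_xk[of k] Suc.prems by auto
    ultimately obtain z where "covers (xk k) z" "z \<le> y" "lam (xk k) z = Suc k"
      using G[OF le] by blast
    then show ?case using G2 Suc.prems by auto
  qed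
qed

lemma JX: "k \<le> n \<Longrightarrow> Sl (sup y (xk k)) = Sl y \<union> {1..k}"
proof (induction k)
  case 0 then show ?case by simp
next
  case (Suc k)
  define u where "u = sup y (xk k)"
  have Su: "Sl u = Sl y \<union> {1..k}" using Suc by (simp add: u_def)
  have yx: "xk k \<le> xk (Suc k)" using xk_mono Suc.prems by simp
  show ?case
  proof (cases "Suc k \<in> Sl u")
    case True
    then have "{1..Suc k} \<subseteq> Sl u" using Su by (simp add: atLeastAtMostSuc_conv)
    then have "xk (Suc k) \<le> u" using X Suc.prems by blast
    then have "sup y (xk (Suc k)) = u" unfolding u_def using yx
      by (intro antisym sup_least) (auto simp: le_supI2)
    moreover have "Suc k \<in> Sl y" using True Su by auto
    moreover have "{1..Suc k} = insert (Suc k) {1..k}" by auto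
    ultimately show ?thesis using Su by (simp add: insert_absorb)
  next
    case False
    have "\<forall>m \<in> Sl top - Sl u. Suc k \<le> m" using Su Sl_top by force
    moreover have "Suc k \<in> Sl top - Sl u" using False Sl_top Suc.prems by auto
    ultimately obtain z where z: "covers u z" "lam u z = Suc k"
      using G[of u top, OF top_greatest] by blast
    have Sz: "Sl z = Sl y \<union> {1..Suc k}" using cover_Sl(1)[OF z(1)] z(2) Su by auto
    then have "xk (Suc k) \<le> z" using X Suc.prems by blast
    moreover have "u \<le> z" using z(1) by (rule covers_le)
    ultimately have "sup y (xk (Suc k)) \<le> z" by (simp add: u_def)
    then have "Sl (sup y (xk (Suc k))) \<subseteq> Sl y \<union> {1..Suc k}" using Sl_mono Sz by blast
    moreover have "Sl y \<union> {1..Suc k} \<subseteq> Sl (sup y (xk (Suc k)))"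
      using Sl_mono[of y "sup y (xk (Suc k))"] Sl_mono[of "xk (Suc k)" "sup y (xk (Suc k))"] Sl_xk[of "Suc k"] Suc.prems
      by auto
    ultimately show ?thesis by blast
  qed
qed

lemma Xd: "k \<le> n \<Longrightarrow> y \<le> xk k \<longleftrightarrow> Sl y \<subseteq> {1..k}"
proof
  assume "k \<le> n" "y \<le> xk k" then show "Sl y \<subseteq> {1..k}" using Sl_mono Sl_xk by blast
next
  assume a: "k \<le> n" "Sl y \<subseteq> {1..k}"
  then have "Sl (sup y (xk k)) \<subseteq> Sl (xk k)" using JX Sl_xk by auto
  then have "xk k = sup y (xk k)" using Sl_eq2[of "xk k" "sup y (xk k)"] by simp
  then show "y \<le> xk k" by (metis sup.cobounded1)
qed

lemma MX: assumes "k \<le> n" shows "Sl (inf z (xk k)) = Sl z \<inter> {1..k}"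
proof -
  have "\<forall>z. card (Sl z) = r \<longrightarrow> Sl z \<inter> {1..k} \<subseteq> Sl (inf z (xk k))" for r
  proof (induction r)
    case 0 then show ?case by auto
  next
    case (Suc r)
    show ?case
    proof (intro allI impI)
      fix z assume cz: "card (Sl z) = Suc r"
      then have ne: "Sl z \<noteq> {}" by auto
      define l where "l = Max (Sl z)"
      have l: "l \<in> Sl z" "\<forall>m\<in>Sl z. m \<le> l" using ne by (auto simp: l_def)
      obtain z' where z': "covers z' z" "lam z' z = l" using G'[of bot z l] l by auto
      have "card (Sl z') = r" using cover_card[OF z'(1)] cz by simp
      then have IH: "Sl z' \<inter> {1..k} \<subseteq> Sl (inf z' (xk k))" using Suc.IH by blast
      have Sz: "Sl z = insert l (Sl z')" using cover_Sl(1)[OF z'(1)] z'(2) by simp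
      show "Sl z \<inter> {1..k} \<subseteq> Sl (inf z (xk k))"
      proof (cases "l \<le> k")
        case True
        then have "Sl z \<subseteq> {1..k}" using l Sl_sub by fastforce
        then have "z \<le> xk k" using Xd assms by blast
        then show ?thesis by (simp add: inf_absorb1)
      next
        case False
        have "z' \<le> z" using z'(1) unfolding covers_def by (blast intro: less_imp_le)
        then have "inf z' (xk k) \<le> inf z (xk k)" by (simp add: inf.coboundedI1)
        then have "Sl (inf z' (xk k)) \<subseteq> Sl (inf z (xk k))" by (rule Sl_mono)
        then show ?thesis using IH Sz False by auto
      qed
    qed
  qed
  then have "Sl z \<inter> {1..k} \<subseteq> Sl (inf z (xk k))" by blast
  moreover have "Sl (inf z (xk k)) \<subseteq> Sl z \<inter> {1..k}"
    using Sl_mono[of "inf z (xk k)" z] Sl_mono[of "inf z (xk k)" "xk k"] Sl_xk assms by auto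
  ultimately show ?thesis by blast
qed

end


context SnEL begin

lemma mc_basic: assumes "maxchain (d::'a list)"
  shows "length d = Suc n" "d ! 0 = bot" "d ! n = top" "sat_chain bot top d"
  using assms maxchain_len[OF assms] sat_chain_hd[of bot top d] sat_chain_last[of bot top d]
  by (auto simp: maxchain_def)

lemma mc_cover: "maxchain (d::'a list) \<Longrightarrow> j < n \<Longrightarrow> covers (d ! j) (d ! Suc j)"
  using mc_basic[of d] unfolding sat_chain_def by simp

lemma mc_lab: "maxchain (d::'a list) \<Longrightarrow> j < n \<Longrightarrow> labels lam d ! j = lam (d ! j) (d ! Suc j)"
  using mc_basic[of d] by (simp add: labels_def)

lemma mc_mono: "maxchain (d::'a list) \<Longrightarrow> j \<le> k \<Longrightarrow> k \<le> n \<Longrightarrow> d ! j \<le> d ! k"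
  using mc_basic[of d] sat_chain_nth_mono[of bot top d j k] by simp

lemma mc_Sl_Suc: assumes "maxchain (d::'a list)" "j < n"
  shows "Sl (d ! Suc j) = insert (labels lam d ! j) (Sl (d ! j))" "labels lam d ! j \<notin> Sl (d ! j)"
  using cover_Sl[OF mc_cover[OF assms]] mc_lab[OF assms] by auto

lemma mc_card: "maxchain (d::'a list) \<Longrightarrow> j \<le> n \<Longrightarrow> card (Sl (d ! j)) = j"
proof (induction j)
  case 0 then show ?case using mc_basic by simp
next
  case (Suc j) then show ?case using mc_Sl_Suc[of d j] by simp
qed

lemma mc_Sl_mono: "maxchain (d::'a list) \<Longrightarrow> j \<le> k \<Longrightarrow> k \<le> n \<Longrightarrow> Sl (d ! j) \<subseteq> Sl (d ! k)"
  using mc_mono Sl_mono by blast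

lemma mc_Sl_n: "maxchain (d::'a list) \<Longrightarrow> Sl (d ! n) = {1..n}"
  using mc_basic Sl_top by simp

lemma mc_mem: "maxchain (d::'a list) \<Longrightarrow> j \<le> n \<Longrightarrow> x \<in> Sl (d ! j) \<longleftrightarrow> (\<exists>p<j. x = labels lam d ! p)"
proof (induction j)
  case 0 then show ?case using mc_basic by simp
next
  case (Suc j) then show ?case using mc_Sl_Suc[of d j] by (auto simp: less_Suc_eq)
qed

definition bef :: "'a list \<Rightarrow> nat \<Rightarrow> nat \<Rightarrow> bool" where
  "bef d x y \<longleftrightarrow> (\<exists>j\<le>n. x \<in> Sl (d ! j) \<and> y \<notin> Sl (d ! j))"

definition idl :: "'a list \<Rightarrow> nat set \<Rightarrow> bool" where
  "idl d I \<longleftrightarrow> I \<subseteq> {1..n} \<and> (\<forall>a\<in>I. \<forall>b. b < a \<longrightarrow> bef d b a \<longrightarrow> b \<in> I)"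

definition pos :: "'a list \<Rightarrow> nat \<Rightarrow> nat" where
  "pos d b = (LEAST j. b \<in> Sl (d ! j))"

definition g :: "'a list \<Rightarrow> nat \<Rightarrow> 'a" where
  "g d b = inf (d ! pos d b) (xk b)"

definition h :: "'a list \<Rightarrow> nat \<Rightarrow> 'a" where
  "h d b = sup (d ! (pos d b - 1)) (xk (b - 1))"

definition phi :: "'a list \<Rightarrow> nat set \<Rightarrow> 'a" where
  "phi d I = foldr sup (map (g d) (sorted_list_of_set I)) bot"

lemma pos: assumes "maxchain (d::'a list)" "b \<in> {1..n}"
  shows "b \<in> Sl (d ! pos d b)" "0 < pos d b" "pos d b \<le> n" "b \<notin> Sl (d ! (pos d b - 1))"
proof -
  have bn: "b \<in> Sl (d ! n)" using mc_Sl_n[OF assms(1)] assms(2) by simp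
  show b1: "b \<in> Sl (d ! pos d b)" unfolding pos_def by (rule LeastI[of _ n]) (rule bn)
  show "pos d b \<le> n" unfolding pos_def by (rule Least_le) (rule bn)
  show p0: "0 < pos d b" using b1 mc_basic[OF assms(1)] by (cases "pos d b") auto
  show "b \<notin> Sl (d ! (pos d b - 1))" unfolding pos_def
    by (rule not_less_Least) (use p0 in \<open>simp add: pos_def\<close>)
qed

lemma pos_iff: assumes "maxchain (d::'a list)" "b \<in> {1..n}" "j \<le> n"
  shows "b \<in> Sl (d ! j) \<longleftrightarrow> pos d b \<le> j"
proof
  assume "b \<in> Sl (d ! j)" then show "pos d b \<le> j" unfolding pos_def by (rule Least_le)
next
  assume "pos d b \<le> j" then show "b \<in> Sl (d ! j)"
    using mc_Sl_mono[OF assms(1), of "pos d b" j] pos(1)[OF assms(1,2)] assms(3) by blast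
qed

lemma bef_pos: assumes "maxchain (d::'a list)" "a \<in> {1..n}" "b \<in> {1..n}"
  shows "bef d a b \<longleftrightarrow> pos d a < pos d b"
proof
  assume "bef d a b"
  then obtain j where "j \<le> n" "a \<in> Sl (d ! j)" "b \<notin> Sl (d ! j)" by (auto simp: bef_def)
  then show "pos d a < pos d b" using pos_iff[OF assms(1,2)] pos_iff[OF assms(1,3)] by auto
next
  assume "pos d a < pos d b"
  then show "bef d a b" unfolding bef_def using pos[OF assms(1,2)] pos_iff[OF assms(1,3)]
    by (intro exI[of _ "pos d a"]) auto
qed

lemma pos_inj: assumes "maxchain (d::'a list)" "a \<in> {1..n}" "b \<in> {1..n}" "pos d a = pos d b" shows "a = b"
proof -
  define p where "p = pos d a"
  have p: "0 < p" "p \<le> n" using pos[OF assms(1,2)] by (auto simp: p_def)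
  have "Sl (d ! p) = insert (labels lam d ! (p - 1)) (Sl (d ! (p - 1)))"
    using mc_Sl_Suc(1)[OF assms(1), of "p - 1"] p by simp
  then show ?thesis using pos[OF assms(1,2)] pos[OF assms(1,3)] assms(4) by (auto simp: p_def)
qed

lemma bef_Sl: "bef d x y \<Longrightarrow> x \<in> {1..n}"
  unfolding bef_def using Sl_sub by blast

lemma idl_fin: "idl d I \<Longrightarrow> finite I"
  by (auto simp: idl_def intro: finite_subset)

lemma phi_le_iff: "finite I \<Longrightarrow> phi d I \<le> z \<longleftrightarrow> (\<forall>b\<in>I. g d b \<le> z)"
  by (simp add: phi_def joinl_le_iff)

lemma g_le_phi: "finite I \<Longrightarrow> b \<in> I \<Longrightarrow> g d b \<le> phi d I"
  using phi_le_iff by blast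

lemma Sl_g: assumes "maxchain (c::'a list)" "b \<in> {1..n}" shows "b \<in> Sl (g c b)"
  using MX[of b "c ! pos c b"] pos(1)[OF assms] assms(2) by (simp add: g_def)

lemma Sl_h: assumes "maxchain (c::'a list)" "b \<in> {1..n}" shows "b \<notin> Sl (h c b)"
proof -
  have "b - 1 \<le> n" using assms(2) by auto
  moreover have "b \<notin> {1..b - 1}" by auto
  ultimately show ?thesis using JX[of "b - 1" "c ! (pos c b - 1)"] pos(4)[OF assms] by (simp add: h_def)
qed

lemma g_le_h: assumes c: "maxchain (c::'a list)" and I: "idl c I" and a: "a \<in> I" and b: "b \<in> {1..n}" "b \<notin> I"
  shows "g c a \<le> h c b"
proof -
  have an: "a \<in> {1..n}" using I a by (auto simp: idl_def)
  have "a \<noteq> b" using a b by auto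
  then have ne: "pos c a \<noteq> pos c b" using pos_inj[OF c an b(1)] by auto
  show ?thesis
  proof (cases "pos c a < pos c b")
    case True
    have "g c a \<le> c ! pos c a" by (simp add: g_def)
    also have "\<dots> \<le> c ! (pos c b - 1)" using mc_mono[OF c, of "pos c a" "pos c b - 1"] True pos[OF c b(1)] by simp
    also have "\<dots> \<le> h c b" by (simp add: h_def)
    finally show ?thesis .
  next
    case False
    then have "pos c b < pos c a" using ne by simp
    then have "bef c b a" using bef_pos[OF c b(1) an] by simp
    then have "\<not> b < a" using I a b(2) by (auto simp: idl_def)
    then have "a \<le> b - 1" using \<open>a \<noteq> b\<close> by simp
    have "g c a \<le> xk a" by (simp add: g_def)
    also have "\<dots> \<le> xk (b - 1)" using xk_mono[of a "b - 1"] \<open>a \<le> b - 1\<close> b(1) by fastforce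
    also have "\<dots> \<le> h c b" by (simp add: h_def)
    finally show ?thesis .
  qed
qed

lemma Phi2: assumes c: "maxchain (c::'a list)" and I: "idl c I" shows "Sl (phi c I) = I"
proof
  have fin: "finite I" using idl_fin[OF I] .
  show "I \<subseteq> Sl (phi c I)"
  proof
    fix b assume b: "b \<in> I"
    then have "b \<in> {1..n}" using I by (auto simp: idl_def)
    then have "b \<in> Sl (g c b)" using Sl_g[OF c] by simp
    then show "b \<in> Sl (phi c I)" using Sl_mono[OF g_le_phi[OF fin b]] by blast
  qed
  show "Sl (phi c I) \<subseteq> I"
  proof
    fix x assume x: "x \<in> Sl (phi c I)"
    then have xn: "x \<in> {1..n}" using Sl_sub by blast
    show "x \<in> I"
    proof (rule ccontr)
      assume "x \<notin> I"
      then have "phi c I \<le> h c x" using phi_le_iff[OF fin] g_le_h[OF c I _ xn] by blast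
      then show False using Sl_mono x Sl_h[OF c xn] by blast
    qed
  qed
qed

lemma Phi3: "finite J \<Longrightarrow> I \<subseteq> J \<Longrightarrow> phi d I \<le> phi d J"
  using phi_le_iff[where I=I and d=d and z="phi d J"] g_le_phi[of J _ d] finite_subset by blast

lemma idl_Un: "idl d I \<Longrightarrow> idl d J \<Longrightarrow> idl d (I \<union> J)"
  by (auto simp: idl_def)

lemma idl_Int: "idl d I \<Longrightarrow> idl d J \<Longrightarrow> idl d (I \<inter> J)"
  by (auto simp: idl_def)

lemma Phi4: assumes "finite I" "finite J" shows "sup (phi d I) (phi d J) = phi d (I \<union> J)"
proof (rule antisym)
  show "sup (phi d I) (phi d J) \<le> phi d (I \<union> J)" using Phi3 assms by auto
  show "phi d (I \<union> J) \<le> sup (phi d I) (phi d J)"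
    using phi_le_iff[where I="I \<union> J" and d=d] g_le_phi[of I _ d] g_le_phi[of J _ d] assms
    by (auto intro: le_supI1 le_supI2)
qed

lemma Phi5: assumes c: "maxchain (c::'a list)" and I: "idl c I" and J: "idl c J"
  shows "inf (phi c I) (phi c J) = phi c (I \<inter> J)"
proof -
  have fI: "finite I" "finite J" using idl_fin I J by auto
  have le: "phi c (I \<inter> J) \<le> inf (phi c I) (phi c J)" using Phi3 fI by auto
  have "Sl (inf (phi c I) (phi c J)) \<subseteq> Sl (phi c I) \<inter> Sl (phi c J)"
    using Sl_mono[of "inf (phi c I) (phi c J)" "phi c I"] Sl_mono[of "inf (phi c I) (phi c J)" "phi c J"] by auto
  also have "\<dots> = Sl (phi c (I \<inter> J))" using Phi2[OF c I] Phi2[OF c J] Phi2[OF c idl_Int[OF I J]] by simp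
  finally show ?thesis using Sl_eq2[OF le] by simp
qed

lemma Phi6: assumes c: "maxchain (c::'a list)" and j: "j \<le> n"
  shows "idl c (Sl (c ! j))" "c ! j = phi c (Sl (c ! j))"
proof -
  show I: "idl c (Sl (c ! j))" unfolding idl_def
  proof (intro conjI ballI allI impI)
    show "Sl (c ! j) \<subseteq> {1..n}" by (rule Sl_sub)
    fix a b assume a: "a \<in> Sl (c ! j)" and "b < a" and ba: "bef c b a"
    have an: "a \<in> {1..n}" using a Sl_sub by blast
    have bn: "b \<in> {1..n}" using bef_Sl[OF ba] .
    have "pos c b < pos c a" using bef_pos[OF c bn an] ba by simp
    moreover have "pos c a \<le> j" using pos_iff[OF c an j] a by simp
    ultimately show "b \<in> Sl (c ! j)" using pos_iff[OF c bn j] by simp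
  qed
  have "phi c (Sl (c ! j)) \<le> c ! j"
  proof -
    have "g c b \<le> c ! j" if b: "b \<in> Sl (c ! j)" for b
    proof -
      have bn: "b \<in> {1..n}" using b Sl_sub by blast
      have "g c b \<le> c ! pos c b" by (simp add: g_def)
      also have "\<dots> \<le> c ! j" using mc_mono[OF c, of "pos c b" j] pos_iff[OF c bn j] b j by simp
      finally show ?thesis .
    qed
    then show ?thesis using phi_le_iff by simp
  qed
  then show "c ! j = phi c (Sl (c ! j))" using Sl_eq2 Phi2[OF c I] by (metis order_refl)
qed

lemma Phi7: assumes c: "maxchain (c::'a list)" and k: "k \<le> n"
  shows "idl c {1..k}" "xk k = phi c {1..k}"
proof -
  show I: "idl c {1..k}" unfolding idl_def using k bef_Sl by fastforce
  have "phi c {1..k} \<le> xk k"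
  proof -
    have "g c b \<le> xk k" if b: "b \<in> {1..k}" for b
    proof -
      have "g c b \<le> xk b" by (simp add: g_def)
      also have "\<dots> \<le> xk k" using xk_mono b k by simp
      finally show ?thesis .
    qed
    then show ?thesis using phi_le_iff by simp
  qed
  then show "xk k = phi c {1..k}" using Sl_eq2 Phi2[OF c I] Sl_xk[OF k] by (metis order_refl)
qed

lemma joinl_gen: "bot \<in> G \<Longrightarrow> (\<And>x y. x \<in> G \<Longrightarrow> y \<in> G \<Longrightarrow> sup x y \<in> G) \<Longrightarrow> set xs \<subseteq> G \<Longrightarrow> foldr sup xs bot \<in> G"
  by (induction xs) auto

lemma xk_in_m0: "k \<le> n \<Longrightarrow> xk k \<in> set (m0 n lam)"
  using m0_chain(2) by (simp add: xk_def)

lemma Phi1: assumes c: "maxchain (c::'a list)" and I: "I \<subseteq> {1..n}"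
  shows "phi c I \<in> gen_sublattice (set (m0 n lam) \<union> set c)"
proof -
  let ?G = "gen_sublattice (set (m0 n lam) \<union> set c)"
  have "bot \<in> ?G" using xk_in_m0[of 0] by (auto intro: gen_sublattice.gen)
  moreover have "g c b \<in> ?G" if "b \<in> I" for b
  proof -
    have bn: "b \<in> {1..n}" using that I by auto
    have "c ! pos c b \<in> set c" using pos(3)[OF c bn] mc_basic(1)[OF c] by simp
    moreover have "xk b \<in> set (m0 n lam)" using xk_in_m0 bn by simp
    ultimately show ?thesis unfolding g_def by (auto intro: gen_sublattice.gen gen_sublattice.meet)
  qed
  moreover have "finite I" using I finite_subset by blast
  ultimately show ?thesis unfolding phi_def
    by (intro joinl_gen) (auto intro: gen_sublattice.join)
qed

end


lemma find_step: "\<not> P (f p) \<Longrightarrow> P (f q) \<Longrightarrow> p < (q::nat) \<Longrightarrow> \<exists>i. p < i \<and> i \<le> q \<and> \<not> P (f (i - 1)) \<and> P (f i)"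
proof (induction q)
  case 0 then show ?case by simp
next
  case (Suc q)
  show ?case
  proof (cases "P (f q) \<and> p < q")
    case True
    then obtain i where "p < i" "i \<le> q" "\<not> P (f (i - 1))" "P (f i)" using Suc.IH Suc.prems by blast
    then show ?thesis by (intro exI[of _ i]) auto
  next
    case False
    then have "\<not> P (f (Suc q - 1))" using Suc.prems by (cases "p = q") auto
    then show ?thesis using Suc.prems by (intro exI[of _ "Suc q"]) auto
  qed
qed

context SnEL begin

lemma U1: assumes d: "maxchain (d::'a list)" and i: "0 < i" "i < n"
  and c1: "covers (d ! (i - 1)) q" and c2: "covers q (d ! Suc i)"
  and le: "lam (d ! (i - 1)) q \<le> lam q (d ! Suc i)"
  shows "Uop lam i d = d[i := q]" "maxchain (d[i := q])"
proof -
  have len: "length d = Suc n" using mc_basic[OF d] by simp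
  have mc': "maxchain (d[i := q])" unfolding maxchain_def sat_chain_def
  proof (intro conjI allI impI)
    have "length (d[i := q]) = Suc n" using len by simp
    then show "d[i := q] \<noteq> []" by (metis Zero_not_Suc list.size(3))
    have "d[i := q] ! 0 = bot" using mc_basic[OF d] i len by (simp add: nth_list_update)
    then show "hd (d[i := q]) = bot" using \<open>d[i := q] \<noteq> []\<close> by (simp add: hd_conv_nth)
    have "d[i := q] ! n = top" using mc_basic[OF d] i len by (simp add: nth_list_update)
    then show "last (d[i := q]) = top" using \<open>d[i := q] \<noteq> []\<close> len by (simp add: last_conv_nth)
    fix j assume j: "Suc j < length (d[i := q])"
    then have jn: "j < n" using len by simp
    show "covers (d[i := q] ! j) (d[i := q] ! Suc j)"
    proof (cases "j = i - 1")
      case True then show ?thesis using c1 i len by (simp add: nth_list_update)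
    next
      case False
      show ?thesis
      proof (cases "j = i")
        case True then show ?thesis using c2 i len by (simp add: nth_list_update)
      next
        case False
        then have "Suc j \<noteq> i" using \<open>j \<noteq> i - 1\<close> by auto
        then show ?thesis using False mc_cover[OF d jn] len jn by (simp add: nth_list_update)
      qed
    qed
  qed
  show "maxchain (d[i := q])" by (rule mc')
  have lab1: "labels lam (d[i := q]) ! (i - 1) = lam (d ! (i - 1)) q"
    using mc_lab[OF mc', of "i - 1"] i len by (simp add: nth_list_update)
  have lab2: "labels lam (d[i := q]) ! i = lam q (d ! Suc i)"
    using mc_lab[OF mc', of i] i len by (simp add: nth_list_update)
  show "Uop lam i d = d[i := q]" unfolding Uop_def
  proof (rule the_equality)
    show "maxchain (d[i := q]) \<and> length (d[i := q]) = length d \<and>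
      (\<forall>j<length d. j \<noteq> i \<longrightarrow> d[i := q] ! j = d ! j) \<and>
      labels lam (d[i := q]) ! (i - 1) \<le> labels lam (d[i := q]) ! i"
      using mc' lab1 lab2 le by simp
    fix c' assume "maxchain c' \<and> length c' = length d \<and> (\<forall>j<length d. j \<noteq> i \<longrightarrow> c' ! j = d ! j) \<and>
      labels lam c' ! (i - 1) \<le> labels lam c' ! i"
    then have c': "maxchain c'" "length c' = length d" "\<And>j. j < length d \<Longrightarrow> j \<noteq> i \<Longrightarrow> c' ! j = d ! j"
      "labels lam c' ! (i - 1) \<le> labels lam c' ! i" by auto
    have e1: "c' ! (i - 1) = d ! (i - 1)" using c'(3)[of "i - 1"] i len by simp
    have e2: "c' ! Suc i = d ! Suc i" using c'(3)[of "Suc i"] i len by simp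
    have cc1: "covers (d ! (i - 1)) (c' ! i)" using mc_cover[OF c'(1), of "i - 1"] e1 i by simp
    have cc2: "covers (c' ! i) (d ! Suc i)" using mc_cover[OF c'(1), of i] e2 i by simp
    have "lam (d ! (i - 1)) (c' ! i) \<le> lam (c' ! i) (d ! Suc i)"
      using c'(4) mc_lab[OF c'(1), of "i - 1"] mc_lab[OF c'(1), of i] e1 e2 i by simp
    then have s1: "sat_chain (d ! (i - 1)) (d ! Suc i) [d ! (i - 1), c' ! i, d ! Suc i]"
      "sorted (labels lam [d ! (i - 1), c' ! i, d ! Suc i])"
      using cc1 cc2 by (simp_all add: sat_chain_Cons2)
    have s2: "sat_chain (d ! (i - 1)) (d ! Suc i) [d ! (i - 1), q, d ! Suc i]"
      "sorted (labels lam [d ! (i - 1), q, d ! Suc i])"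
      using c1 c2 le by (simp_all add: sat_chain_Cons2)
    have "c' ! i = q" using inc_uniq[OF s1 s2] by simp
    show "c' = d[i := q]"
    proof (rule nth_equalityI)
      show "length c' = length (d[i := q])" using c'(2) by simp
      fix ia assume "ia < length c'"
      then show "c' ! ia = d[i := q] ! ia" using c'(2) c'(3)[of ia] \<open>c' ! i = q\<close> by (cases "ia = i") auto
    qed
  qed
qed

lemma U2: assumes d: "maxchain (d::'a list)" and i: "0 < i" "i < n"
  shows "\<exists>q. covers (d ! (i - 1)) q \<and> covers q (d ! Suc i) \<and> lam (d ! (i - 1)) q \<le> lam q (d ! Suc i)"
proof -
  have "d ! (i - 1) \<le> d ! Suc i" using mc_mono[OF d, of "i - 1" "Suc i"] i by simp
  then obtain cs where cs: "sat_chain (d ! (i - 1)) (d ! Suc i) cs" "sorted (labels lam cs)"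
    using ex_chain by blast
  have "card (Sl (d ! Suc i)) = card (Sl (d ! (i - 1))) + length (labels lam cs)" using chain_Sl(4)[OF cs(1)] .
  then have "length cs = 3" using mc_card[OF d, of "Suc i"] mc_card[OF d, of "i - 1"] i by simp
  then obtain a q b where abq: "cs = [a, q, b]"
    by (auto simp: numeral_3_eq_3 length_Suc_conv)
  then show ?thesis using cs by (auto simp: sat_chain_Cons2)
qed

lemma U0: assumes d: "maxchain (d::'a list)" and i: "0 < i" "i < n"
  and le: "labels lam d ! (i - 1) \<le> labels lam d ! i"
  shows "Uop lam i d = d"
proof -
  have "covers (d ! (i - 1)) (d ! i)" using mc_cover[OF d, of "i - 1"] i by simp
  moreover have "covers (d ! i) (d ! Suc i)" using mc_cover[OF d, of i] i by simp
  moreover have "lam (d ! (i - 1)) (d ! i) \<le> lam (d ! i) (d ! Suc i)"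
    using le mc_lab[OF d, of "i - 1"] mc_lab[OF d, of i] i by simp
  ultimately show ?thesis using U1(1)[OF d i] by simp
qed

lemma Mset_maxchain: assumes c: "maxchain (c::'a list)" shows "d \<in> Mset lam c \<Longrightarrow> maxchain d"
proof (induction rule: Mset.induct)
  case base then show ?case by (rule c)
next
  case (step d i)
  then have d: "maxchain d" by simp
  have i: "0 < i" "i < n" using step mc_basic(1)[OF d] by auto
  obtain q where "covers (d ! (i - 1)) q" "covers q (d ! Suc i)" "lam (d ! (i - 1)) q \<le> lam q (d ! Suc i)"
    using U2[OF d i] by blast
  then show ?case using U1[OF d i] by simp
qed

lemma Mset_trans: "x \<in> Mset lam e \<Longrightarrow> e \<in> Mset lam c \<Longrightarrow> x \<in> Mset lam c"
proof (induction rule: Mset.induct)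
  case base then show ?case .
next
  case (step d i) then show ?case by (auto intro: Mset.step)
qed

lemma insert_eq_notin: "insert x A = insert y A \<Longrightarrow> x \<notin> A \<Longrightarrow> y \<notin> A \<Longrightarrow> x = y"
  by blast

lemma Mi: assumes c: "maxchain (c::'a list)" shows "d \<in> Mset lam c \<Longrightarrow>
  maxchain d \<and> (\<forall>j\<le>n. idl c (Sl (d ! j)) \<and> d ! j = phi c (Sl (d ! j)))"
proof (induction rule: Mset.induct)
  case base then show ?case using Phi6[OF c] c by blast
next
  case (step d i)
  then have d: "maxchain d" and IH: "\<And>j. j \<le> n \<Longrightarrow> idl c (Sl (d ! j)) \<and> d ! j = phi c (Sl (d ! j))"
    by auto
  have i: "0 < i" "i < n" using step mc_basic(1)[OF d] by auto
  show ?case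
  proof (cases "labels lam d ! (i - 1) \<le> labels lam d ! i")
    case True
    then show ?thesis using U0[OF d i] d IH by simp
  next
    case False
    define b where "b = labels lam d ! (i - 1)"
    define a where "a = labels lam d ! i"
    have ab: "a < b" using False by (simp add: a_def b_def)
    define I0 where "I0 = Sl (d ! (i - 1))"
    have Si: "Sl (d ! i) = insert b I0" "b \<notin> I0"
      using mc_Sl_Suc[OF d, of "i - 1"] i by (simp_all add: I0_def b_def)
    have Si1: "Sl (d ! Suc i) = insert a (insert b I0)" "a \<notin> insert b I0"
      using mc_Sl_Suc[OF d, of i] i Si by (simp_all add: a_def)
    define J where "J = insert a I0"
    have I0: "idl c I0" "d ! (i - 1) = phi c I0" using IH[of "i - 1"] i by (simp_all add: I0_def)
    have I2: "idl c (insert a (insert b I0))" "d ! Suc i = phi c (insert a (insert b I0))"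
      using IH[of "Suc i"] i Si1 by simp_all
    have J: "idl c J" unfolding idl_def
    proof (intro conjI ballI allI impI)
      show "J \<subseteq> {1..n}" using I2(1) by (auto simp: idl_def J_def)
      fix x y assume x: "x \<in> J" and yx: "y < x" and bef: "bef c y x"
      show "y \<in> J"
      proof (cases "x = a")
        case True
        then have "y \<in> insert a (insert b I0)" using I2(1) yx bef by (auto simp: idl_def)
        then show ?thesis using yx True ab by (auto simp: J_def)
      next
        case False
        then have "x \<in> I0" using x by (simp add: J_def)
        then show ?thesis using I0(1) yx bef by (auto simp: idl_def J_def)
      qed
    qed
    have fin2: "finite (insert a (insert b I0))" using idl_fin[OF I2(1)] .
    define p where "p = phi c J"
    have SJ: "Sl p = J" using Phi2[OF c J] by (simp add: p_def)
    have le1: "d ! (i - 1) \<le> p" using I0(2) Phi3[of J I0 c] idl_fin[OF J] by (auto simp: p_def J_def)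
    have le2: "p \<le> d ! Suc i" using I2(2) Phi3[OF fin2, of J c] by (auto simp: p_def J_def)
    have cardJ: "card J = Suc (card I0)" "card (insert a (insert b I0)) = Suc (card J)"
      using Si1(2) Si(2) idl_fin[OF I0(1)] ab by (auto simp: J_def)
    have cI0: "Sl (d ! (i - 1)) = I0" by (simp add: I0_def)
    have ca1: "card (Sl p) = Suc (card (Sl (d ! (i - 1))))" using SJ cardJ cI0 by simp
    then have "d ! (i - 1) \<noteq> p" by auto
    then have cv1: "covers (d ! (i - 1)) p" using card_cover[OF _ ca1] le1 by simp
    have ca2: "card (Sl (d ! Suc i)) = Suc (card (Sl p))" using SJ cardJ Si1(1) by simp
    then have "p \<noteq> d ! Suc i" by auto
    then have cv2: "covers p (d ! Suc i)" using card_cover[OF _ ca2] le2 by simp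
    have l1: "lam (d ! (i - 1)) p = a"
      using cover_Sl[OF cv1] SJ cI0 Si1(2) insert_eq_notin[of "lam (d ! (i - 1)) p" I0 a]
      by (auto simp: J_def)
    have l2: "lam p (d ! Suc i) = b"
      using cover_Sl[OF cv2] SJ Si1 insert_eq_notin[of "lam p (d ! Suc i)" J b] ab
      by (auto simp: J_def insert_commute)
    have U: "Uop lam i d = d[i := p]" "maxchain (d[i := p])"
      using U1[OF d i cv1 cv2] l1 l2 ab by simp_all
    have len: "length d = Suc n" using mc_basic[OF d] by simp
    have "\<forall>j\<le>n. idl c (Sl (Uop lam i d ! j)) \<and> Uop lam i d ! j = phi c (Sl (Uop lam i d ! j))"
    proof (intro allI impI)
      fix j assume j: "j \<le> n"
      show "idl c (Sl (Uop lam i d ! j)) \<and> Uop lam i d ! j = phi c (Sl (Uop lam i d ! j))"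
      proof (cases "j = i")
        case True then show ?thesis using U(1) len i SJ J by (simp add: p_def)
      next
        case False then show ?thesis using U(1) IH[OF j] by simp
      qed
    qed
    then show ?thesis using U by simp
  qed
qed

end

context SnEL begin
definition mu :: "nat set \<Rightarrow> 'a list \<Rightarrow> nat" where
  "mu I d = (\<Sum>j\<le>n. card (Sl (d ! j) - I))"

lemma R_step: assumes d: "maxchain (d::'a list)" and I: "idl d I" and ne: "Sl (d ! card I) \<noteq> I"
  shows "\<exists>d'. d' \<in> Mset lam d \<and> maxchain d' \<and> idl d' I \<and> mu I d' < mu I d"
proof -
  define k where "k = card I"
  have fI: "finite I" using idl_fin[OF I] .
  have "I \<subseteq> {1..n}" using I by (simp add: idl_def)
  then have "card I \<le> card {1..n}" by (intro card_mono) auto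
  then have kn: "k \<le> n" by (simp add: k_def)
  have ck: "card (Sl (d ! k)) = k" using mc_card[OF d kn] .
  have "\<not> Sl (d ! k) \<subseteq> I"
  proof
    assume sub: "Sl (d ! k) \<subseteq> I"
    have "Sl (d ! k) = I" using card_subset_eq[OF fI sub] ck by (simp add: k_def)
    then show False using ne by (simp add: k_def)
  qed
  then obtain b0 where b0: "b0 \<in> Sl (d ! k)" "b0 \<notin> I" by blast
  have "\<not> I \<subseteq> Sl (d ! k)"
  proof
    assume sub: "I \<subseteq> Sl (d ! k)"
    have "I = Sl (d ! k)" using card_subset_eq[OF finite_Sl sub] ck by (simp add: k_def)
    then show False using ne by (simp add: k_def)
  qed
  then obtain a0 where a0: "a0 \<in> I" "a0 \<notin> Sl (d ! k)" by blast
  obtain p where p: "p < k" "b0 = labels lam d ! p" using mc_mem[OF d kn] b0 by blast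
  have "a0 \<in> Sl (d ! n)" using a0 I mc_Sl_n[OF d] by (auto simp: idl_def)
  then obtain q where q: "q < n" "a0 = labels lam d ! q" using mc_mem[OF d, of n] by blast
  have "\<not> q < k"
  proof
    assume "q < k"
    then have "a0 \<in> Sl (d ! k)" using q(2) mc_mem[OF d kn, of a0] by blast
    then show False using a0(2) by simp
  qed
  then have "p < q" using p by simp
  moreover have "labels lam d ! p \<notin> I" using b0 p by simp
  moreover have "labels lam d ! q \<in> I" using a0 q by simp
  ultimately obtain i where i: "p < i" "i \<le> q" "labels lam d ! (i - 1) \<notin> I" "labels lam d ! i \<in> I"
    using find_step[of "\<lambda>x. x \<in> I" "\<lambda>j. labels lam d ! j" p q] by blast
  have i0: "0 < i" "i < n" using i q by auto
  define b where "b = labels lam d ! (i - 1)"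
  define a where "a = labels lam d ! i"
  define S0 where "S0 = Sl (d ! (i - 1))"
  have Si: "Sl (d ! i) = insert b S0" "b \<notin> S0"
    using mc_Sl_Suc[OF d, of "i - 1"] i0 by (simp_all add: S0_def b_def)
  have Si1: "Sl (d ! Suc i) = insert a (insert b S0)" "a \<notin> insert b S0"
    using mc_Sl_Suc[OF d, of i] i0 Si by (simp_all add: a_def)
  have aI: "a \<in> I" "b \<notin> I" using i by (simp_all add: a_def b_def)
  have "bef d b a" unfolding bef_def using Si Si1 i0 by (intro exI[of _ i]) auto
  then have "\<not> b < a" using I aI by (auto simp: idl_def)
  then have ab: "a < b" using aI by (cases "a = b") auto
  obtain r where r: "covers (d ! (i - 1)) r" "covers r (d ! Suc i)" "lam (d ! (i - 1)) r \<le> lam r (d ! Suc i)"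
    using U2[OF d i0] by blast
  have U: "Uop lam i d = d[i := r]" "maxchain (d[i := r])" using U1[OF d i0 r] by simp_all
  define l1 where "l1 = lam (d ! (i - 1)) r"
  define l2 where "l2 = lam r (d ! Suc i)"
  have Sr: "Sl r = insert l1 S0" "l1 \<notin> S0" using cover_Sl[OF r(1)] by (simp_all add: l1_def S0_def)
  have Sr2: "Sl (d ! Suc i) = insert l2 (Sl r)" "l2 \<notin> Sl r" using cover_Sl[OF r(2)] by (simp_all add: l2_def)
  have "l1 \<in> {a, b}" "l2 \<in> {a, b}" "l1 \<noteq> l2" "l1 \<le> l2"
    using Sr Sr2 Si1 Si r(3) by (auto simp: l1_def l2_def)
  then have "l1 = a" using ab by auto
  then have SR: "Sl r = insert a S0" using Sr by simp
  define d' where "d' = d[i := r]"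
  have len: "length d = Suc n" using mc_basic[OF d] by simp
  have Sd': "\<And>j. j \<noteq> i \<Longrightarrow> Sl (d' ! j) = Sl (d ! j)" by (simp add: d'_def)
  have Sd'i: "Sl (d' ! i) = insert a S0" using SR len i0 by (simp add: d'_def)
  have mc': "maxchain d'" using U by (simp add: d'_def)
  have "Uop lam i d \<in> Mset lam d" by (rule Mset.step[OF Mset.base]) (use i0 len in auto)
  then have inM: "d' \<in> Mset lam d" using U by (simp add: d'_def)
  have "mu I d' < mu I d" unfolding mu_def
  proof (rule sum_strict_mono_ex1)
    show "finite {..n}" by simp
    show "\<forall>j\<in>{..n}. card (Sl (d' ! j) - I) \<le> card (Sl (d ! j) - I)"
    proof
      fix j assume "j \<in> {..n}"
      show "card (Sl (d' ! j) - I) \<le> card (Sl (d ! j) - I)"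
      proof (cases "j = i")
        case True
        have "finite S0" by (simp add: S0_def)
        then show ?thesis using True Sd'i Si aI by (intro card_mono) auto
      qed (simp add: Sd')
    qed
    have "finite S0" by (simp add: S0_def)
    then have "card (Sl (d ! i) - I) = Suc (card (S0 - I))" using Si aI by (simp add: insert_Diff_if)
    moreover have "card (Sl (d' ! i) - I) = card (S0 - I)" using Sd'i aI by simp
    ultimately show "\<exists>j\<in>{..n}. card (Sl (d' ! j) - I) < card (Sl (d ! j) - I)"
      using i0 by (intro bexI[of _ i]) auto
  qed
  moreover have "idl d' I" unfolding idl_def
  proof (intro conjI ballI allI impI)
    show "I \<subseteq> {1..n}" using I by (simp add: idl_def)
    fix x y assume x: "x \<in> I" and yx: "y < x" and bf: "bef d' y x"
    then obtain j where j: "j \<le> n" "y \<in> Sl (d' ! j)" "x \<notin> Sl (d' ! j)" by (auto simp: bef_def)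
    have "bef d y x"
    proof (cases "j = i")
      case False then show ?thesis using j Sd' by (auto simp: bef_def)
    next
      case True
      then have y: "y \<in> insert a S0" and xx: "x \<notin> insert a S0" using j Sd'i by auto
      show ?thesis
      proof (cases "y \<in> S0")
        case True
        then show ?thesis unfolding bef_def using xx i0 by (intro exI[of _ "i - 1"]) (auto simp: S0_def)
      next
        case False
        then have "y = a" using y by simp
        moreover have "x \<noteq> b" using x aI by auto
        ultimately show ?thesis unfolding bef_def using xx Si1 i0 by (intro exI[of _ "Suc i"]) auto
      qed
    qed
    then show "y \<in> I" using I x yx by (auto simp: idl_def)
  qed
  ultimately show ?thesis using inM mc' by blast
qed

lemma R: "maxchain (d::'a list) \<Longrightarrow> idl d I \<Longrightarrow> \<exists>d'\<in>Mset lam d. \<exists>j\<le>n. Sl (d' ! j) = I"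
proof (induction "mu I d" arbitrary: d rule: less_induct)
  case less
  show ?case
  proof (cases "Sl (d ! card I) = I")
    case True
    have "card I \<le> n" using less.prems card_mono[of "{1..n}" I] by (auto simp: idl_def)
    then show ?thesis using True Mset.base by blast
  next
    case False
    then obtain d' where d': "d' \<in> Mset lam d" "maxchain d'" "idl d' I" "mu I d' < mu I d"
      using R_step[OF less.prems] by blast
    then obtain d'' j where "d'' \<in> Mset lam d'" "j \<le> n" "Sl (d'' ! j) = I" using less.hyps by blast
    then show ?thesis using Mset_trans[OF _ d'(1)] by blast
  qed
qed

end

context SnEL begin
lemma main: assumes c: "maxchain (c::'a list)" shows "Qset lam c = Lsub n lam c"
proof -
  define Phis where "Phis = {phi c I | I. idl c I}"
  have Q1: "Qset lam c \<subseteq> Phis"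
  proof
    fix y assume "y \<in> Qset lam c"
    then obtain d where d: "d \<in> Mset lam c" "y \<in> set d" by (auto simp: Qset_def)
    have md: "maxchain d" using Mi[OF c d(1)] by simp
    obtain j where j: "j < length d" "y = d ! j" using d(2) by (auto simp: in_set_conv_nth)
    have "j \<le> n" using j mc_basic(1)[OF md] by simp
    then show "y \<in> Phis" using Mi[OF c d(1)] j by (auto simp: Phis_def)
  qed
  have Q2: "Phis \<subseteq> Qset lam c"
  proof
    fix y assume "y \<in> Phis"
    then obtain I where I: "idl c I" "y = phi c I" by (auto simp: Phis_def)
    obtain d' j where d': "d' \<in> Mset lam c" "j \<le> n" "Sl (d' ! j) = I" using R[OF c I(1)] by blast
    have "d' ! j = y" using Mi[OF c d'(1)] d' I by auto
    moreover have "j < length d'" using Mi[OF c d'(1)] mc_basic(1) d'(2) by auto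
    ultimately show "y \<in> Qset lam c" using d'(1) unfolding Qset_def by (auto intro: nth_mem)
  qed
  have L1: "Lsub n lam c \<subseteq> Phis"
  proof
    fix y assume "y \<in> Lsub n lam c"
    then show "y \<in> Phis" unfolding Lsub_def
    proof (induction rule: gen_sublattice.induct)
      case (gen x)
      then show ?case
      proof
        assume "x \<in> set (m0 n lam)"
        then obtain k where "k < Suc n" "x = xk k" using m0_chain(2) by (auto simp: in_set_conv_nth xk_def)
        then show ?case using Phi7[OF c, of k] by (auto simp: Phis_def)
      next
        assume "x \<in> set c"
        then obtain j where "j < Suc n" "x = c ! j" using mc_basic(1)[OF c] by (auto simp: in_set_conv_nth)
        then show ?case using Phi6[OF c, of j] by (auto simp: Phis_def)
      qed
    next
      case (meet x y)
      then show ?case using Phi5[OF c] idl_Int by (auto simp: Phis_def)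
    next
      case (join x y)
      then show ?case using Phi4 idl_Un idl_fin by (auto simp: Phis_def)
    qed
  qed
  have L2: "Phis \<subseteq> Lsub n lam c"
    using Phi1[OF c] by (auto simp: Phis_def Lsub_def idl_def)
  show ?thesis using Q1 Q2 L1 L2 by blast
qed

end

theorem mainTheorem8:
  fixes lam :: "'a::{finite,bounded_lattice} \<Rightarrow> 'a \<Rightarrow> nat"
    and n :: nat and m m' :: "'a list"
  assumes "graded_rank TYPE('a) n"
    and "Sn_EL_labeling n lam"
    and "maxchain m"
    and "m' \<in> Mset lam m"
  shows "Qset lam m' = Lsub n lam m'"
proof -
  interpret SnEL lam n using assms(1,2) by unfold_locales
  have "maxchain m'" using Mset_maxchain[OF assms(3,4)] .
  then show ?thesis by (rule main)
qed

end
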